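(* Let $\mathbb{D}\subset\mathbb{C}$ be the open unit disc, $D=\{(z,z):z\in\mathbb{D}\}\subset\mathbb{D}^2$, and define $H:\mathbb{D}^2\setminus D\to\mathbb{C}^3$ by \[ H(z,w)=\Big(\frac{1-zw}{z-w},\; i\,\frac{1+zw}{z-w},\; -i\,\frac{z+w}{z-w}\Big). \] Let \[ \mathcal{D}^{(2)}_{1,\infty}=\{(z_1,z_2,z_3)\in\mathbb{C}^3:\ 1<|z_1|^2+|z_2|^2-|z_3|^2,\ z_1^2+z_2^2-z_3^2=1,\ \operatorname{Im}(z_2(\overline{z_1}+\overline{z_3}))>0\}. \] For $a\in[0,1)$ let $\mathscr{F}_a=\{(z_1,z_2)\in\mathbb{D}^2: |\frac{z_1-z_2}{1-\overline{z_1}z_2}|=a\}$, and for $\alpha>1$ let \[ \eta^{(2)}_\alpha=\Big\{(z_1,z_2,z_3)\in\mathcal{D}^{(2)}_{1,\infty}: |z_1|^2+|z_2|^2-|z_3|^2=\sqrt{\tfrac{\alpha+1}{2}}\Big\}. \] Then $H$ maps $\mathbb{D}^2\setminus D$ biholomorphically onto $\mathcal{D}^{(2)}_{1,\infty}$. Moreover, for every $a\in(0,1)$, $H$ restricts to a CR-isomorphism between $\mathscr{F}_a$ and $\eta^{(2)}_\alpha$, where $\alpha=\frac{8}{a^4}-\frac{8}{a^2}+1$.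
   Context: $\mathscr{F}_a$ for $a\in(0,1)$ and $\eta^{(2)}_\alpha$ are real hypersurfaces, regarded as CR manifolds with the CR structures induced from $\mathbb{C}^2$ and $\mathbb{C}^3$ respectively. *)

theory Defs
  imports "HOL-Analysis.Analysis"
begin

definition sc2 :: "complex \<Rightarrow> complex \<times> complex \<Rightarrow> complex \<times> complex" where
  "sc2 c v = (c * fst v, c * snd v)"

definition sc3 :: "complex \<Rightarrow> complex \<times> complex \<times> complex \<Rightarrow> complex \<times> complex \<times> complex" where
  "sc3 c v = (c * fst v, c * fst (snd v), c * snd (snd v))"

text \<open>Holomorphic maps: real Frechet differentiable with complex-linear derivative at every point.\<close>

definition holo23 :: "(complex \<times> complex) set \<Rightarrow> (complex \<times> complex \<Rightarrow> complex \<times> complex \<times> complex) \<Rightarrow> bool" where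
  "holo23 U f \<longleftrightarrow> open U \<and>
     (\<forall>x\<in>U. \<exists>f'. (f has_derivative f') (at x) \<and> (\<forall>c v. f' (sc2 c v) = sc3 c (f' v)))"

definition holo32 :: "(complex \<times> complex \<times> complex) set \<Rightarrow> (complex \<times> complex \<times> complex \<Rightarrow> complex \<times> complex) \<Rightarrow> bool" where
  "holo32 V f \<longleftrightarrow> open V \<and>
     (\<forall>x\<in>V. \<exists>f'. (f has_derivative f') (at x) \<and> (\<forall>c v. f' (sc3 c v) = sc2 c (f' v)))"

text \<open>Holomorphic map on a (complex submanifold) subset M of C^3: locally the restriction of an
  ambient holomorphic map.\<close>

definition holo_on_sub32 :: "(complex \<times> complex \<times> complex) set \<Rightarrow> (complex \<times> complex \<times> complex \<Rightarrow> complex \<times> complex) \<Rightarrow> bool" where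
  "holo_on_sub32 M g \<longleftrightarrow>
     (\<forall>p\<in>M. \<exists>V G. open V \<and> p \<in> V \<and> holo32 V G \<and> (\<forall>q\<in>V \<inter> M. G q = g q))"

definition biholo :: "(complex \<times> complex) set \<Rightarrow> (complex \<times> complex \<times> complex) set \<Rightarrow> (complex \<times> complex \<Rightarrow> complex \<times> complex \<times> complex) \<Rightarrow> bool" where
  "biholo U M f \<longleftrightarrow> holo23 U f \<and> bij_betw f U M \<and> holo_on_sub32 M (inv_into U f)"

definition tangent_vecs :: "'a::real_normed_vector set \<Rightarrow> 'a \<Rightarrow> 'a set" where
  "tangent_vecs S p = {v. \<exists>\<gamma>. \<gamma> 0 = p \<and> (\<forall>t\<in>{-1<..<1}. \<gamma> t \<in> S) \<and>
       \<gamma> C1_differentiable_on {-1<..<1} \<and> (\<gamma> has_vector_derivative v) (at 0)}"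

text \<open>CR map between real submanifolds: locally the restriction of a C^1 ambient map, whose
  differential is complex linear on the complex tangent space (CR distribution)
  T_p S \<inter> J T_p S, with J the complex structures JA, JB.\<close>

definition CR_map :: "('a::real_normed_vector \<Rightarrow> 'a) \<Rightarrow> ('b::real_normed_vector \<Rightarrow> 'b) \<Rightarrow> 'a set \<Rightarrow> ('a \<Rightarrow> 'b) \<Rightarrow> bool" where
  "CR_map JA JB S \<phi> \<longleftrightarrow>
     (\<forall>p\<in>S. \<exists>V \<Phi> \<Phi>'. open V \<and> p \<in> V \<and>
        (\<forall>x\<in>V. (\<Phi> has_derivative blinfun_apply (\<Phi>' x)) (at x)) \<and> continuous_on V \<Phi>' \<and>
        (\<forall>x\<in>V \<inter> S. \<Phi> x = \<phi> x) \<and>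
        (\<forall>v\<in>tangent_vecs S p. JA v \<in> tangent_vecs S p \<longrightarrow>
            blinfun_apply (\<Phi>' p) (JA v) = JB (blinfun_apply (\<Phi>' p) v)))"

definition CR_iso :: "('a::real_normed_vector \<Rightarrow> 'a) \<Rightarrow> ('b::real_normed_vector \<Rightarrow> 'b) \<Rightarrow> 'a set \<Rightarrow> 'b set \<Rightarrow> ('a \<Rightarrow> 'b) \<Rightarrow> bool" where
  "CR_iso JA JB S S' \<phi> \<longleftrightarrow> bij_betw \<phi> S S' \<and> CR_map JA JB S \<phi> \<and> CR_map JB JA S' (inv_into S \<phi>)"

definition bidisc_minus_diag :: "(complex \<times> complex) set" where
  "bidisc_minus_diag = {(z, w). z \<in> ball 0 1 \<and> w \<in> ball 0 1 \<and> z \<noteq> w}"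

definition Hmap :: "complex \<times> complex \<Rightarrow> complex \<times> complex \<times> complex" where
  "Hmap = (\<lambda>(z, w). ((1 - z * w) / (z - w), \<i> * ((1 + z * w) / (z - w)), - \<i> * ((z + w) / (z - w))))"

definition D2_1inf :: "(complex \<times> complex \<times> complex) set" where
  "D2_1inf = {(z1, z2, z3).
      1 < (cmod z1)\<^sup>2 + (cmod z2)\<^sup>2 - (cmod z3)\<^sup>2 \<and>
      z1\<^sup>2 + z2\<^sup>2 - z3\<^sup>2 = 1 \<and>
      Im (z2 * (cnj z1 + cnj z3)) > 0}"

definition Fa :: "real \<Rightarrow> (complex \<times> complex) set" where
  "Fa a = {(z1, z2). z1 \<in> ball 0 1 \<and> z2 \<in> ball 0 1 \<and> cmod ((z1 - z2) / (1 - cnj z1 * z2)) = a}"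

definition eta2 :: "real \<Rightarrow> (complex \<times> complex \<times> complex) set" where
  "eta2 \<alpha> = {(z1, z2, z3). (z1, z2, z3) \<in> D2_1inf \<and>
      (cmod z1)\<^sup>2 + (cmod z2)\<^sup>2 - (cmod z3)\<^sup>2 = sqrt ((\<alpha> + 1) / 2)}"

end

theory Submission
  imports Defs
begin


lemma cmod_sq: "(cmod x)^2 = (Re x)^2 + (Im x)^2"
  by (simp add: cmod_power2)

lemma id_N: "(cmod (1 - z*w))^2 + (cmod (1 + z*w))^2 - (cmod (z+w))^2
   = 2*(1 - (cmod z)^2)*(1 - (cmod w)^2) + (cmod (z - w))^2"
  unfolding cmod_sq by (simp add: power2_eq_square algebra_simps)

lemma id_Im: "Re ((1 + z*w) * cnj ((1 - \<i>*z)*(1 - \<i>*w))) =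
   ((cmod (1 - \<i>*w))^2 * (1 - (cmod z)^2) + (cmod (1 - \<i>*z))^2 * (1 - (cmod w)^2)) / 2"
  unfolding cmod_sq by (simp add: power2_eq_square algebra_simps)

lemma id_Y: "2*(Im (z2 * cnj a))^2 - 2*(Im a)^2 = Re (a^2 * (1 - (cnj z2)^2)) + (cmod a)^2 * ((cmod z2)^2 - 1)"
  unfolding cmod_sq by (simp add: power2_eq_square algebra_simps)

lemma id_Re: "Re ((z1+z3) * cnj (z1 - z3)) = (cmod z1)^2 - (cmod z3)^2"
  unfolding cmod_sq by (simp add: power2_eq_square algebra_simps)

lemma id_ab: "(cmod a)^2 * Re (a * cnj b) = Re (a^2 * cnj (a*b))"
  unfolding cmod_sq by (simp add: power2_eq_square algebra_simps)

lemma id_disc1: "(cmod (c + \<i>*a))^2 + 4 * Im (a * cnj c) = (cmod (a + \<i>*c))^2"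
  unfolding cmod_sq by (simp add: power2_eq_square algebra_simps)

lemma id_disc2: "(cmod (\<i>*a - d))^2 + 4 * Im (d * cnj a) = (cmod (a - \<i>*d))^2"
  unfolding cmod_sq by (simp add: power2_eq_square algebra_simps)

lemma id_pseudo: "(cmod (1 - cnj z * w))^2 - (cmod (z - w))^2 = (1 - (cmod z)^2)*(1 - (cmod w)^2)"
  unfolding cmod_sq by (simp add: power2_eq_square algebra_simps)

lemma P3: "(c + \<i>*a)*(a - \<i>*d) - (\<i>*a - d)*(a + \<i>*c) = 2*a*(c+d)"
  by (simp add: algebra_simps)
lemma P4: "(a + \<i>*c)*(a - \<i>*d) + (c + \<i>*a)*(\<i>*a - d) = 2*\<i>*a*(c-d)"
  by (simp add: algebra_simps)
lemma P5: "(a + \<i>*c)*(a - \<i>*d) - (c + \<i>*a)*(\<i>*a - d) = 2*a^2 + 2*c*d"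
  by (simp add: algebra_simps power2_eq_square)
lemma P6: "(c + \<i>*a)*(a - \<i>*d) + (\<i>*a - d)*(a + \<i>*c) = 2*\<i>*a^2 - 2*\<i>*c*d"
  by (simp add: algebra_simps power2_eq_square)



definition NN :: "complex \<times> complex \<times> complex \<Rightarrow> real" where
  "NN p = (cmod (fst p))^2 + (cmod (fst (snd p)))^2 - (cmod (snd (snd p)))^2"

lemma Hmap_simp: "Hmap (z, w) = ((1 - z * w) / (z - w), \<i> * ((1 + z * w) / (z - w)), - \<i> * ((z + w) / (z - w)))"
  by (simp add: Hmap_def)

lemma one_minus_ne: assumes "cmod u < 1" shows "1 - u \<noteq> 0"
  using assms by auto

lemma H_N:
  assumes "z \<noteq> w"
  shows "NN (Hmap (z, w)) = 1 + 2*(1-(cmod z)^2)*(1-(cmod w)^2)/(cmod (z - w))^2"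
proof -
  have q: "cmod (z - w) \<noteq> 0" using assms by simp
  have "NN (Hmap (z, w)) = (cmod (1 - z*w))^2/ (cmod (z - w))^2 + (cmod (1 + z*w))^2/ (cmod (z - w))^2 - (cmod (z+w))^2 / (cmod (z - w))^2"
    by (simp add: NN_def Hmap_simp norm_mult norm_divide power_divide)
  also have "\<dots> = ((cmod (1 - z*w))^2 + (cmod (1 + z*w))^2 - (cmod (z+w))^2) / (cmod (z - w))^2"
    by (simp add: diff_divide_distrib add_divide_distrib)
  also have "\<dots> = 1 + 2*(1-(cmod z)^2)*(1-(cmod w)^2)/(cmod (z - w))^2"
    unfolding id_N using q by (simp add: add_divide_distrib)
  finally show ?thesis .
qed

lemma quad_gen: assumes "q \<noteq> 0"
  shows "(A/q)^2 + (\<i>*(B/q))^2 - (-\<i>*(C/q))^2 = (A^2 - B^2 + C^2)/q^2"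
  by (simp add: power_mult_distrib power_divide diff_divide_distrib add_divide_distrib)

lemma H_in:
  assumes "cmod z < 1" "cmod w < 1" "z \<noteq> w"
  shows "Hmap (z, w) \<in> D2_1inf"
proof -
  have q: "z - w \<noteq> 0" using assms by simp
  have qn: "(cmod (z - w))^2 > 0" using q by simp
  have b1: "1 - (cmod z)^2 > 0" "1 - (cmod w)^2 > 0" using assms
    by (simp_all add: power_less_one_iff abs_square_less_1)
  have N: "NN (Hmap (z, w)) > 1"
    unfolding H_N[OF assms(3)] using b1 qn by simp
  have "(1 - z * w)^2 - (1 + z * w)^2 + (z + w)^2 = (z - w)^2"
    by (simp add: power2_eq_square algebra_simps)
  then have quad: "((1 - z * w) / (z - w))^2 + (\<i> * ((1 + z * w) / (z - w)))^2 - (- \<i> * ((z + w) / (z - w)))^2 = 1"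
    using q by (subst quad_gen[OF q]) simp
  have s: "(1 - z * w) / (z - w) + (- \<i> * ((z + w) / (z - w))) = ((1 - z * w) - \<i> * (z + w)) / (z - w)"
    by (simp add: diff_divide_distrib)
  also have "(1 - z * w) - \<i> * (z + w) = (1 - \<i>*z)*(1 - \<i>*w)"
    by (simp add: algebra_simps)
  finally have s: "(1 - z * w) / (z - w) + (- \<i> * ((z + w) / (z - w))) = ((1 - \<i>*z)*(1 - \<i>*w)) / (z - w)" .
  have "\<i> * ((1 + z * w) / (z - w)) * (cnj ((1 - z * w) / (z - w)) + cnj (- \<i> * ((z + w) / (z - w))))
     = \<i> * ((1 + z * w) / (z - w)) * cnj (((1 - \<i>*z)*(1 - \<i>*w)) / (z - w))"
    by (simp only: s complex_cnj_add[symmetric])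
  also have "\<dots> = \<i> * ((1 + z*w) * cnj ((1 - \<i>*z)*(1 - \<i>*w))) / ((z - w) * cnj (z - w))"
    using q by (simp add: complex_cnj_divide field_simps)
  also have "\<dots> = \<i> * ((1 + z*w) * cnj ((1 - \<i>*z)*(1 - \<i>*w))) / complex_of_real ((cmod (z - w))^2)"
    by (simp only: complex_norm_square)
  finally have e: "Im (\<i> * ((1 + z * w) / (z - w)) * (cnj ((1 - z * w) / (z - w)) + cnj (- \<i> * ((z + w) / (z - w)))))
     = Re ((1 + z*w) * cnj ((1 - \<i>*z)*(1 - \<i>*w))) / (cmod (z - w))^2"
    by (simp add: Im_divide_of_real)
  have a1: "(cmod (1 - \<i>*w))^2 > 0" using one_minus_ne[of "\<i>*w"] assms by (simp add: norm_mult)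
  have a2: "(cmod (1 - \<i>*z))^2 > 0" using one_minus_ne[of "\<i>*z"] assms by (simp add: norm_mult)
  have "Re ((1 + z*w) * cnj ((1 - \<i>*z)*(1 - \<i>*w))) > 0"
    unfolding id_Im using a1 a2 b1 by (simp add: add_pos_pos)
  then have Im: "Im (\<i> * ((1 + z * w) / (z - w)) * (cnj ((1 - z * w) / (z - w)) + cnj (- \<i> * ((z + w) / (z - w))))) > 0"
    unfolding e using qn by simp
  have N': "1 < (cmod ((1 - z * w) / (z - w)))\<^sup>2 + (cmod (\<i> * ((1 + z * w) / (z - w))))\<^sup>2 - (cmod (- \<i> * ((z + w) / (z - w))))\<^sup>2"
    using N by (simp only: NN_def Hmap_simp fst_conv snd_conv)
  show ?thesis using N' quad Im unfolding Hmap_simp D2_1inf_def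
    by (simp only: mem_Collect_eq prod.case complex_cnj_add simp_thms)
qed



definition Gmap :: "complex \<times> complex \<times> complex \<Rightarrow> complex \<times> complex" where
  "Gmap p = (let a = fst p + snd (snd p); c = 1 - fst (snd p); d = 1 + fst (snd p) in
     ((c + \<i>*a)/(a + \<i>*c), (\<i>*a - d)/(a - \<i>*d)))"

lemma div_cancel_q: "q \<noteq> (0::complex) \<Longrightarrow> (X/q) / (Y/q) = X / Y"
  by simp

lemma cancel1: "u \<noteq> 0 \<Longrightarrow> (2*z*u)/(2*u) = (z::complex)" by simp
lemma cancel2: "u \<noteq> 0 \<Longrightarrow> (-2*\<i>*w*u)/(2*(-\<i>*u)) = (w::complex)" by simp

lemma GH:
  assumes "cmod z < 1" "cmod w < 1" "z \<noteq> w"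
  shows "Gmap (Hmap (z, w)) = (z, w)"
proof -
  have q: "z - w \<noteq> 0" using assms by simp
  have n1: "1 - \<i>*w \<noteq> 0" "1 - \<i>*z \<noteq> 0" using one_minus_ne[of "\<i>*w"] one_minus_ne[of "\<i>*z"] assms
    by (auto simp: norm_mult)
  have 5: "1 - \<i>*z = -\<i> * (z + \<i>)" by (simp add: algebra_simps)
  have zi: "z + \<i> \<noteq> 0" using n1(2) unfolding 5 by auto
  define a where "a = (1 - z * w) / (z - w) + (- \<i> * ((z + w) / (z - w)))"
  define c where "c = 1 - \<i> * ((1 + z * w) / (z - w))"
  define d where "d = 1 + \<i> * ((1 + z * w) / (z - w))"
  have ea0: "a = ((1 - z * w) - \<i> * (z + w)) / (z - w)"
    unfolding a_def by (simp add: diff_divide_distrib)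
  have "(1 - z * w) - \<i> * (z + w) = (1 - \<i>*z)*(1 - \<i>*w)" by (simp add: algebra_simps)
  with ea0 have ea: "a = ((1 - \<i>*z)*(1 - \<i>*w)) / (z - w)" by simp
  have ec0: "c = ((z - w) - \<i> * (1 + z * w)) / (z - w)"
    unfolding c_def using q by (simp add: field_simps)
  have "(z - w) - \<i> * (1 + z * w) = (z - \<i>)*(1 - \<i>*w)" by (simp add: algebra_simps)
  with ec0 have ec: "c = ((z - \<i>)*(1 - \<i>*w)) / (z - w)" by simp
  have ed0: "d = ((z - w) + \<i> * (1 + z * w)) / (z - w)"
    unfolding d_def using q by (simp add: field_simps)
  have "(z - w) + \<i> * (1 + z * w) = (z + \<i>)*(1 + \<i>*w)" by (simp add: algebra_simps)
  with ed0 have ed: "d = ((z + \<i>)*(1 + \<i>*w)) / (z - w)" by simp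
  have g: "Gmap (Hmap (z, w)) = ((c + \<i>*a)/(a + \<i>*c), (\<i>*a - d)/(a - \<i>*d))"
    unfolding Gmap_def Let_def Hmap_simp a_def c_def d_def by simp
  have 1: "c + \<i>*a = (2*z*(1 - \<i>*w)) / (z - w)"
    unfolding ea ec times_divide_eq_right add_divide_distrib[symmetric] by (simp add: algebra_simps)
  have 2: "a + \<i>*c = (2*(1 - \<i>*w)) / (z - w)"
    unfolding ea ec times_divide_eq_right add_divide_distrib[symmetric] by (simp add: algebra_simps)
  have 3: "\<i>*a - d = (-2*\<i>*w*(z + \<i>)) / (z - w)"
    unfolding ea ed times_divide_eq_right diff_divide_distrib[symmetric] by (simp add: algebra_simps)
  have 4: "a - \<i>*d = (2*(1 - \<i>*z)) / (z - w)"
    unfolding ea ed times_divide_eq_right diff_divide_distrib[symmetric] by (simp add: algebra_simps)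
  show ?thesis unfolding g 1 2 3 4 div_cancel_q[OF q] 5 cancel1[OF n1(1)] cancel2[OF zi] ..
qed



lemma Hmap_frac:
  assumes "D1 \<noteq> 0" "D2 \<noteq> 0" "N1*D2 - N2*D1 \<noteq> 0"
  shows "Hmap (N1/D1, N2/D2) = ((D1*D2 - N1*N2)/(N1*D2 - N2*D1), \<i>*((D1*D2 + N1*N2)/(N1*D2 - N2*D1)),
     -\<i>*((N1*D2 + N2*D1)/(N1*D2 - N2*D1)))"
proof -
  have e: "N1/D1 - N2/D2 = (N1*D2 - N2*D1)/(D1*D2)" using assms by (simp add: field_simps)
  have "N1/D1 \<noteq> N2/D2" using e assms by auto
  then show ?thesis using assms unfolding Hmap_simp by (simp add: field_simps)
qed

definition Vg :: "(complex \<times> complex \<times> complex) set" where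
  "Vg = {p. fst p + snd (snd p) + \<i>*(1 - fst (snd p)) \<noteq> 0 \<and> fst p + snd (snd p) - \<i>*(1 + fst (snd p)) \<noteq> 0}"

lemma HG:
  assumes "p \<in> D2_1inf"
  shows "Gmap p \<in> bidisc_minus_diag \<and> Hmap (Gmap p) = p \<and> p \<in> Vg"
proof -
  obtain z1 z2 z3 where p: "p = (z1, z2, z3)" by (metis prod.exhaust)
  have N: "1 < (cmod z1)\<^sup>2 + (cmod z2)\<^sup>2 - (cmod z3)\<^sup>2" and quad: "z1\<^sup>2 + z2\<^sup>2 - z3\<^sup>2 = 1"
    and Y0: "Im (z2 * (cnj z1 + cnj z3)) > 0"
    using assms unfolding p D2_1inf_def by auto
  define a where "a = z1 + z3"
  define c where "c = 1 - z2"
  define d where "d = 1 + z2"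
  define Y where "Y = Im (z2 * cnj a)"
  have Y: "Y > 0" using Y0 unfolding Y_def a_def by simp
  have a0: "a \<noteq> 0" using Y unfolding Y_def by auto
  have ab: "a * (z1 - z3) = 1 - z2^2" using quad unfolding a_def by (simp add: algebra_simps power2_eq_square)
  have "(cmod a)^2 * ((cmod z1)\<^sup>2 - (cmod z3)\<^sup>2) = Re (a^2 * (1 - (cnj z2)^2))"
    using id_ab[of a "z1 - z3"] unfolding ab id_Re[of z1 z3, folded a_def] by simp
  then have key: "2*Y^2 - 2*(Im a)^2 = (cmod a)^2 * ((cmod z1)\<^sup>2 + (cmod z2)\<^sup>2 - (cmod z3)\<^sup>2 - 1)"
    unfolding Y_def id_Y by (simp add: algebra_simps)
  have "(cmod a)^2 > 0" using a0 by simp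
  then have "(Im a)^2 < Y^2" using key N by (smt (verit) mult_pos_pos)
  then have YI: "\<bar>Im a\<bar> < Y" using Y by (metis abs_le_square_iff abs_of_pos not_less)
  have ac: "Im (a * cnj c) = Im a + Y" unfolding c_def Y_def by (simp add: algebra_simps)
  have da: "Im (d * cnj a) = - Im a + Y" unfolding d_def Y_def by (simp add: algebra_simps)
  have ac0: "Im (a * cnj c) > 0" "Im (d * cnj a) > 0" using ac da YI by auto
  have D1: "a + \<i>*c \<noteq> 0" and z: "cmod ((c + \<i>*a)/(a + \<i>*c)) < 1"
  proof -
    have h: "(cmod (c + \<i>*a))^2 < (cmod (a + \<i>*c))^2" using id_disc1[of c a] ac0 by linarith
    then show "a + \<i>*c \<noteq> 0" by auto
    then show "cmod ((c + \<i>*a)/(a + \<i>*c)) < 1" using h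
      by (simp add: norm_divide divide_less_eq power_less_imp_less_base)
  qed
  have D2: "a - \<i>*d \<noteq> 0" and w: "cmod ((\<i>*a - d)/(a - \<i>*d)) < 1"
  proof -
    have h: "(cmod (\<i>*a - d))^2 < (cmod (a - \<i>*d))^2" using id_disc2[of a d] ac0 by linarith
    then show "a - \<i>*d \<noteq> 0" by auto
    then show "cmod ((\<i>*a - d)/(a - \<i>*d)) < 1" using h
      by (simp add: norm_divide divide_less_eq power_less_imp_less_base)
  qed
  have Q: "(c + \<i>*a)*(a - \<i>*d) - (\<i>*a - d)*(a + \<i>*c) = 4*a"
    unfolding P3 c_def d_def by simp
  have Q0: "(c + \<i>*a)*(a - \<i>*d) - (\<i>*a - d)*(a + \<i>*c) \<noteq> 0" unfolding Q using a0 by simp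
  have zw: "(c + \<i>*a)/(a + \<i>*c) \<noteq> (\<i>*a - d)/(a - \<i>*d)"
  proof
    assume "(c + \<i>*a)/(a + \<i>*c) = (\<i>*a - d)/(a - \<i>*d)"
    then have "(c + \<i>*a)*(a - \<i>*d) = (\<i>*a - d)*(a + \<i>*c)" using D1 D2 by (simp add: field_simps)
    then show False using Q0 by simp
  qed
  have g: "Gmap p = ((c + \<i>*a)/(a + \<i>*c), (\<i>*a - d)/(a - \<i>*d))"
    unfolding Gmap_def p a_def c_def d_def Let_def by simp
  have cd: "c * d = z1^2 - z3^2" using quad unfolding c_def d_def by (simp add: algebra_simps power2_eq_square)
  have e1: "(a + \<i>*c)*(a - \<i>*d) - (c + \<i>*a)*(\<i>*a - d) = 4*a*z1"
    unfolding P5 mult.assoc cd unfolding a_def by (simp add: algebra_simps power2_eq_square)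
  have e2: "(a + \<i>*c)*(a - \<i>*d) + (c + \<i>*a)*(\<i>*a - d) = -4*\<i>*a*z2"
    unfolding P4 unfolding c_def d_def by (simp add: algebra_simps)
  have e3: "(c + \<i>*a)*(a - \<i>*d) + (\<i>*a - d)*(a + \<i>*c) = 4*\<i>*a*z3"
    unfolding P6 mult.assoc cd unfolding a_def by (simp add: algebra_simps power2_eq_square)
  have H: "Hmap (Gmap p) = p"
    unfolding g Hmap_frac[OF D1 D2 Q0] e1 e2 e3 Q using a0 by (simp add: p)
  have "p \<in> Vg" using D1 D2 unfolding Vg_def p a_def c_def d_def by simp
  then show ?thesis using H g z w zw unfolding bidisc_minus_diag_def by simp
qed



lemma N_delta:
  assumes "cmod z < 1" "cmod w < 1" "z \<noteq> w"
  shows "NN (Hmap (z, w)) = 2 / (cmod ((z - w) / (1 - cnj z * w)))^2 - 1"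
proof -
  have q: "(cmod (z - w))^2 \<noteq> 0" using assms by simp
  have "cmod (cnj z * w) < 1" using assms
    by (simp add: norm_mult) (metis mult_strict_mono' norm_ge_zero mult_1_right less_le_trans mult_le_cancel_left1 not_le)
  then have r: "(cmod (1 - cnj z * w))^2 \<noteq> 0" using one_minus_ne by auto
  have e: "2*(1-(cmod z)^2)*(1-(cmod w)^2) = 2*((cmod (1 - cnj z * w))^2 - (cmod (z - w))^2)"
    using id_pseudo[of z w] by simp
  show ?thesis unfolding H_N[OF assms(3)] e norm_divide power_divide
    using q r by (simp add: field_simps)
qed

lemma open_Vg: "open Vg"
  unfolding Vg_def by (intro open_Collect_conj open_Collect_neq continuous_intros)

lemma open_U: "open bidisc_minus_diag"
proof -
  have "bidisc_minus_diag = {p. cmod (fst p) < 1} \<inter> {p. cmod (snd p) < 1} \<inter> {p. fst p \<noteq> snd p}"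
    unfolding bidisc_minus_diag_def by auto
  show ?thesis unfolding \<open>bidisc_minus_diag = _\<close> by (intro open_Int open_Collect_less open_Collect_neq continuous_intros)
qed




definition DH :: "complex \<times> complex \<Rightarrow> complex \<times> complex \<Rightarrow> complex \<times> complex \<times> complex" where
 "DH x v = (let z = fst x; w = snd x; h = fst v; k = snd v; q = z - w in
   ((-(h*w + z*k)*q - (1 - z*w)*(h-k)) / (q*q),
    \<i> * (((h*w+z*k)*q - (1+z*w)*(h-k)) / (q*q)),
    -\<i> * (((h+k)*q - (z+w)*(h-k)) / (q*q))))"

lemma Hmap_deriv:
  assumes "fst x \<noteq> snd x"
  shows "(Hmap has_derivative DH x) (at x)"
proof -
  have e: "Hmap = (\<lambda>p. ((1 - fst p * snd p) / (fst p - snd p), \<i> * ((1 + fst p * snd p) / (fst p - snd p)),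
      - \<i> * ((fst p + snd p) / (fst p - snd p))))"
    by (auto simp: Hmap_def)
  have ne: "fst x - snd x \<noteq> 0" using assms by simp
  have 1: "((\<lambda>p. (1 - fst p * snd p) / (fst p - snd p)) has_derivative (\<lambda>v. fst (DH x v))) (at x)"
    unfolding DH_def Let_def fst_conv
    by (rule has_derivative_eq_rhs, (rule derivative_intros)+, rule ne, rule ext, simp add: field_simps ne)
  have 2: "((\<lambda>p. \<i> * ((1 + fst p * snd p) / (fst p - snd p))) has_derivative (\<lambda>v. fst (snd (DH x v)))) (at x)"
    unfolding DH_def Let_def fst_conv snd_conv
    by (rule has_derivative_eq_rhs, (rule derivative_intros)+, rule ne, rule ext, simp add: field_simps ne)
  have 3: "((\<lambda>p. - \<i> * ((fst p + snd p) / (fst p - snd p))) has_derivative (\<lambda>v. snd (snd (DH x v)))) (at x)"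
    unfolding DH_def Let_def fst_conv snd_conv
    by (rule has_derivative_eq_rhs, (rule derivative_intros)+, rule ne, rule ext, simp add: field_simps ne)
  show ?thesis unfolding e
    using has_derivative_Pair[OF 1 has_derivative_Pair[OF 2 3]] by simp
qed



definition DG :: "complex \<times> complex \<times> complex \<Rightarrow> complex \<times> complex \<times> complex \<Rightarrow> complex \<times> complex" where
  "DG x v = (let a = fst x + snd (snd x); c = 1 - fst (snd x); d = 1 + fst (snd x);
      ha = fst v + snd (snd v); hc = - fst (snd v); hd = fst (snd v) in
     (((hc + \<i>*ha)*(a + \<i>*c) - (c + \<i>*a)*(ha + \<i>*hc)) / ((a + \<i>*c)*(a + \<i>*c)),
      ((\<i>*ha - hd)*(a - \<i>*d) - (\<i>*a - d)*(ha - \<i>*hd)) / ((a - \<i>*d)*(a - \<i>*d))))"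

lemma div_lin_sq: "Q \<noteq> 0 \<Longrightarrow> X * Q - Y * Z = W \<Longrightarrow> (X * Q - Y * Z) / (Q * (Q::complex)) = W / (Q*Q)"
  by simp

lemma Gmap_deriv:
  assumes "x \<in> Vg"
  shows "(Gmap has_derivative DG x) (at x)"
proof -
  have e: "Gmap = (\<lambda>p. ((1 - fst (snd p) + \<i>*(fst p + snd (snd p))) / (fst p + snd (snd p) + \<i>*(1 - fst (snd p))),
      (\<i>*(fst p + snd (snd p)) - (1 + fst (snd p))) / (fst p + snd (snd p) - \<i>*(1 + fst (snd p)))))"
    by (auto simp: Gmap_def Let_def)
  have n1: "fst x + snd (snd x) + \<i>*(1 - fst (snd x)) \<noteq> 0" and n2: "fst x + snd (snd x) - \<i>*(1 + fst (snd x)) \<noteq> 0"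
    using assms by (auto simp: Vg_def)
  have 1: "((\<lambda>p. (1 - fst (snd p) + \<i>*(fst p + snd (snd p))) / (fst p + snd (snd p) + \<i>*(1 - fst (snd p)))) has_derivative (\<lambda>v. fst (DG x v))) (at x)"
    unfolding DG_def Let_def fst_conv
    by (rule has_derivative_eq_rhs, rule has_derivative_divide', (rule derivative_intros)+, rule n1, rule ext, simp)
  have 2: "((\<lambda>p. (\<i>*(fst p + snd (snd p)) - (1 + fst (snd p))) / (fst p + snd (snd p) - \<i>*(1 + fst (snd p)))) has_derivative (\<lambda>v. snd (DG x v))) (at x)"
    unfolding DG_def Let_def fst_conv snd_conv
    by (rule has_derivative_eq_rhs, rule has_derivative_divide', (rule derivative_intros)+, rule n2, rule ext, simp)
  show ?thesis unfolding e
    using has_derivative_Pair[OF 1 2] by simp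
qed

lemma div_lin: "X = c * Y \<Longrightarrow> X / (Q::complex) = c * (Y / Q)"
  by simp

lemma DG_lin: "DG x (sc3 c v) = sc2 c (DG x v)"
  unfolding DG_def Let_def sc2_def sc3_def fst_conv snd_conv prod.inject
  by (intro conjI div_lin) algebra+

lemma DH_lin: "DH x (sc2 c v) = sc3 c (DH x v)"
  unfolding DH_def Let_def sc2_def sc3_def fst_conv snd_conv prod.inject
  by (intro conjI div_lin) algebra+

lemma DG_cont: "continuous_on Vg (\<lambda>x. DG x i)"
  unfolding DG_def Let_def by (intro continuous_intros) (auto simp: Vg_def)

lemma DH_cont: "continuous_on bidisc_minus_diag (\<lambda>x. DH x i)"
  unfolding DH_def Let_def by (intro continuous_intros) (auto simp: bidisc_minus_diag_def)

lemma CR_map_holo: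
  fixes \<Phi> :: "'a::euclidean_space \<Rightarrow> 'b::real_normed_vector"
  assumes "open V" "S \<subseteq> V" "\<And>x. x \<in> V \<Longrightarrow> (\<Phi> has_derivative D x) (at x)"
    "\<And>x v. x \<in> V \<Longrightarrow> D x (JA v) = JB (D x v)"
    "\<And>i. continuous_on V (\<lambda>x. D x i)"
    "\<And>x. x \<in> S \<Longrightarrow> \<Phi> x = \<phi> x"
  shows "CR_map JA JB S \<phi>"
  unfolding CR_map_def
proof (intro ballI)
  fix p assume p: "p \<in> S"
  have bl: "\<And>x. x \<in> V \<Longrightarrow> blinfun_apply (Blinfun (D x)) = D x"
    using assms(3) by (metis bounded_linear_Blinfun_apply has_derivative_bounded_linear)
  have 1: "p \<in> V" using p assms(2) by auto
  have 2: "\<forall>x\<in>V. (\<Phi> has_derivative blinfun_apply (Blinfun (D x))) (at x)"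
    using assms(3) bl by simp
  have 3: "continuous_on V (\<lambda>x. Blinfun (D x))"
  proof (rule continuous_on_blinfun_componentwise)
    fix i :: 'a
    assume "i \<in> Basis"
    show "continuous_on V (\<lambda>x. blinfun_apply (Blinfun (D x)) i)"
      using assms(5)[of i] by (simp add: bl cong: continuous_on_cong)
  qed
  have 4: "\<forall>x\<in>V \<inter> S. \<Phi> x = \<phi> x" using assms(6) by auto
  have 5: "\<forall>v\<in>tangent_vecs S p. JA v \<in> tangent_vecs S p \<longrightarrow>
            blinfun_apply (Blinfun (D p)) (JA v) = JB (blinfun_apply (Blinfun (D p)) v)"
    using bl[OF 1] assms(4)[OF 1] by auto
  show "\<exists>V \<Phi> \<Phi>'. open V \<and> p \<in> V \<and>
        (\<forall>x\<in>V. (\<Phi> has_derivative blinfun_apply (\<Phi>' x)) (at x)) \<and> continuous_on V \<Phi>' \<and>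
        (\<forall>x\<in>V \<inter> S. \<Phi> x = \<phi> x) \<and>
        (\<forall>v\<in>tangent_vecs S p. JA v \<in> tangent_vecs S p \<longrightarrow>
            blinfun_apply (\<Phi>' p) (JA v) = JB (blinfun_apply (\<Phi>' p) v))"
    by (intro exI[of _ V] exI[of _ \<Phi>] exI[of _ "\<lambda>x. Blinfun (D x)"] conjI assms(1) 1 2 3 4 5)
qed



lemma U_iff: "x \<in> bidisc_minus_diag \<longleftrightarrow> cmod (fst x) < 1 \<and> cmod (snd x) < 1 \<and> fst x \<noteq> snd x"
  by (cases x) (simp add: bidisc_minus_diag_def)

lemma eta2_iff: "p \<in> eta2 \<alpha> \<longleftrightarrow> p \<in> D2_1inf \<and> NN p = sqrt ((\<alpha> + 1) / 2)"
  by (cases p) (simp add: eta2_def NN_def)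

lemma Fa_iff: "x \<in> Fa a \<longleftrightarrow> cmod (fst x) < 1 \<and> cmod (snd x) < 1 \<and>
    cmod ((fst x - snd x) / (1 - cnj (fst x) * snd x)) = a"
  by (cases x) (simp add: Fa_def)

lemma GH': "x \<in> bidisc_minus_diag \<Longrightarrow> Gmap (Hmap x) = x"
  by (cases x) (simp add: U_iff GH)

lemma H_in': "x \<in> bidisc_minus_diag \<Longrightarrow> Hmap x \<in> D2_1inf"
  by (cases x) (simp add: U_iff H_in)

lemma inj_H: "inj_on Hmap bidisc_minus_diag"
  by (rule inj_on_inverseI[of _ Gmap]) (rule GH')

lemma img_H: "Hmap ` bidisc_minus_diag = D2_1inf"
proof
  show "Hmap ` bidisc_minus_diag \<subseteq> D2_1inf" using H_in' by auto
  show "D2_1inf \<subseteq> Hmap ` bidisc_minus_diag"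
  proof
    fix p assume "p \<in> D2_1inf"
    from HG[OF this] show "p \<in> Hmap ` bidisc_minus_diag" by (metis image_eqI)
  qed
qed

lemma inv_H: "q \<in> D2_1inf \<Longrightarrow> inv_into bidisc_minus_diag Hmap q = Gmap q"
  using HG[of q] inv_into_f_f[OF inj_H, of "Gmap q"] by auto

lemma holo_H: "holo23 bidisc_minus_diag Hmap"
  unfolding holo23_def
proof (intro conjI ballI open_U)
  fix x assume "x \<in> bidisc_minus_diag"
  then have "fst x \<noteq> snd x" by (simp add: U_iff)
  then show "\<exists>f'. (Hmap has_derivative f') (at x) \<and> (\<forall>c v. f' (sc2 c v) = sc3 c (f' v))"
    using Hmap_deriv DH_lin by blast
qed

lemma holo_G: "holo32 Vg Gmap"
  unfolding holo32_def using open_Vg Gmap_deriv DG_lin by blast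

lemma part1: "biholo bidisc_minus_diag D2_1inf Hmap"
  unfolding biholo_def
proof (intro conjI holo_H)
  show "bij_betw Hmap bidisc_minus_diag D2_1inf" using inj_H img_H by (simp add: bij_betw_def)
  show "holo_on_sub32 D2_1inf (inv_into bidisc_minus_diag Hmap)"
    unfolding holo_on_sub32_def
  proof
    fix p assume p: "p \<in> D2_1inf"
    show "\<exists>V G. open V \<and> p \<in> V \<and> holo32 V G \<and> (\<forall>q\<in>V \<inter> D2_1inf. G q = inv_into bidisc_minus_diag Hmap q)"
      using open_Vg HG[OF p] holo_G inv_H by (intro exI[of _ Vg] exI[of _ Gmap]) auto
  qed
qed

lemma part2:
  fixes a :: real
  assumes a: "0 < a" "a < 1"
  shows "CR_iso (sc2 \<i>) (sc3 \<i>) (Fa a) (eta2 (8 / a ^ 4 - 8 / a ^ 2 + 1)) Hmap"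
proof -
  define \<alpha> where "\<alpha> = 8 / a ^ 4 - 8 / a ^ 2 + 1"
  have a2: "a^2 < 1" "a^2 > 0" using a by (simp_all add: power_less_one_iff)
  have pos: "2 / a^2 - 1 > 0" using a2 by (simp add: field_simps)
  have an: "a \<noteq> 0" using a by simp
  have "(\<alpha> + 1) / 2 = (2 / a^2 - 1)^2" unfolding \<alpha>_def using an
    by (simp add: field_simps power2_eq_square power4_eq_xxxx)
  then have sq: "sqrt ((\<alpha> + 1) / 2) = 2 / a^2 - 1" using pos by simp
  have FU: "Fa a \<subseteq> bidisc_minus_diag"
  proof
    fix x assume "x \<in> Fa a"
    then show "x \<in> bidisc_minus_diag" using a unfolding Fa_iff U_iff by auto
  qed
  have NF: "NN (Hmap x) = 2 / a^2 - 1" if "x \<in> Fa a" for x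
  proof -
    have u: "cmod (fst x) < 1" "cmod (snd x) < 1" "fst x \<noteq> snd x" using that FU by (auto simp: U_iff)
    have d: "cmod ((fst x - snd x) / (1 - cnj (fst x) * snd x)) = a" using that by (simp add: Fa_iff)
    show ?thesis using N_delta[OF u] d by simp
  qed
  have inj: "inj_on Hmap (Fa a)" using inj_H FU by (rule inj_on_subset)
  have ing: "Gmap p \<in> Fa a \<and> Hmap (Gmap p) = p" if p: "p \<in> eta2 \<alpha>" for p
  proof -
    have pD: "p \<in> D2_1inf" and Np: "NN p = 2 / a^2 - 1" using p sq by (auto simp: eta2_iff)
    obtain z w where g: "Gmap p = (z, w)" by (metis prod.exhaust)
    have U: "(z, w) \<in> bidisc_minus_diag" and H: "Hmap (z, w) = p" using HG[OF pD] g by auto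
    have zw: "cmod z < 1" "cmod w < 1" "z \<noteq> w" using U by (auto simp: U_iff)
    define \<delta> where "\<delta> = cmod ((z - w) / (1 - cnj z * w))"
    have "2 / \<delta>^2 - 1 = 2 / a^2 - 1" using N_delta[OF zw] H Np unfolding \<delta>_def by simp
    then have "\<delta>^2 = a^2" using a2 by (auto simp: field_simps split: if_splits)
    then have "\<delta> = a" using a unfolding \<delta>_def by (simp add: power2_eq_iff_nonneg)
    then have "(z, w) \<in> Fa a" using zw unfolding Fa_iff \<delta>_def by simp
    then show ?thesis using g H by simp
  qed
  have img: "Hmap ` Fa a = eta2 \<alpha>"
  proof
    show "Hmap ` Fa a \<subseteq> eta2 \<alpha>"
      using FU H_in' NF sq by (auto simp: eta2_iff)
    show "eta2 \<alpha> \<subseteq> Hmap ` Fa a"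
      using ing by (metis image_eqI subsetI)
  qed
  have bij: "bij_betw Hmap (Fa a) (eta2 \<alpha>)" using inj img by (simp add: bij_betw_def)
  have etaV: "eta2 \<alpha> \<subseteq> Vg" using HG by (auto simp: eta2_iff)
  have cr1: "CR_map (sc2 \<i>) (sc3 \<i>) (Fa a) Hmap"
    by (rule CR_map_holo[OF open_U FU, where D = DH]) (auto simp: Hmap_deriv U_iff DH_lin DH_cont)
  have invG: "inv_into (Fa a) Hmap q = Gmap q" if "q \<in> eta2 \<alpha>" for q
    using ing[OF that] inv_into_f_f[OF inj, of "Gmap q"] by auto
  have cr2: "CR_map (sc3 \<i>) (sc2 \<i>) (eta2 \<alpha>) (inv_into (Fa a) Hmap)"
    by (rule CR_map_holo[OF open_Vg etaV, where D = DG]) (auto simp: Gmap_deriv DG_lin DG_cont invG)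
  show ?thesis unfolding \<alpha>_def[symmetric] CR_iso_def using bij cr1 cr2 by simp
qed

theorem proposition2p1:
  shows "biholo bidisc_minus_diag D2_1inf Hmap \<and>
    (\<forall>a::real. 0 < a \<and> a < 1 \<longrightarrow>
       CR_iso (sc2 \<i>) (sc3 \<i>) (Fa a) (eta2 (8 / a ^ 4 - 8 / a ^ 2 + 1)) Hmap)"
  using part1 part2 by blast

end
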